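(* In the switching-gradient setting of the context, suppose there is a deterministic $\mathcal E\ge0$ with $\mathbb P\big(|e_t|\le\mathcal E\text{ for all }t\in[T]\big)\ge1-\delta/2$, where $\delta\in(0,1)$. Set $$\varepsilon:=\frac{R^2}{2\eta T}+\frac{\eta G^2}{2}+\frac{2DG}{\sqrt T}\sqrt{2\log\frac4\delta}+\mathcal E.$$ Then with probability at least $1-\delta$ the set $\mathcal A=\{t\in[T]:v_t\le\varepsilon\}$ is nonempty and $\bar w=\frac1{|\mathcal A|}\sum_{t\in\mathcal A}w_t$ satisfies $f(\bar w)-f(w^\star)\le\varepsilon$ and $h(\bar w)\le\varepsilon+\mathcal E$.
   Context: $(\mathcal X,\|\cdot\|)$ is a reflexive Banach space with dual norm $\|\cdot\|_*$; $\mathcal W\subseteq\mathcal X$ nonempty closed convex; $\Phi$ is a mirror map (proper, weakly l.s.c., $1$-strongly convex on $\mathcal W$ w.r.t. $\|\cdot\|$, Gâteaux differentiable on $\mathcal W$) with Bregman divergence $D_\Phi(x,y)=\Phi(x)-\Phi(y)-\langle\nabla\Phi(y),x-y\rangle$. Problem: minimize $f(w)=\mathbb E[F(w,\xi)]$ over $w\in\mathcal W$ subject to $h(w)=\mathbb E[H(w,\xi)]\le0$, where $f,h$ are convex on $\mathcal W$, and $w^\star$ is an optimal solution. Assume $\sup_{u,v\in\mathcal W}\|u-v\|\le D$ and $\sup_{u,v\in\mathcal W}D_\Phi(u,v)\le R^2/2$. Switching gradient method with constant step $\eta>0$ and horizon $T$: at each $t\in[T]$, a real-valued estimate $v_t$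 of $h(w_t)$ is available, with error $e_t:=v_t-h(w_t)$; set $U_t=\mathbb I_{\{v_t\le\varepsilon\}}F'(w_t,\zeta_t)+(1-\mathbb I_{\{v_t\le\varepsilon\}})H'(w_t,\zeta_t)$ and $w_{t+1}=\arg\min_{w\in\mathcal W}\{\eta\langle U_t,w\rangle+D_\Phi(w,w_t)\}$. Let $(\mathcal G_t)_{t\ge1}$ be an increasing family of $\sigma$-algebras such that $w_t$ and $v_t$ are $\mathcal G_t$-measurable and $\zeta_t$ is $\mathcal G_{t+1}$-measurable (e.g. $\mathcal G_t$ generated by the past and the estimator randomness at time $t$, with $\zeta_t$ independent of $\mathcal G_t$). The stochastic subgradients satisfy $\mathbb E[F'(w_t,\zeta_t)\mid\mathcal G_t]\in\partial f(w_t)$, $\mathbb E[H'(w_t,\zeta_t)\mid\mathcal G_t]\in\partial h(w_t)$, and $\|F'(w,\zeta)\|_*\le G$, $\|H'(w,\zeta)\|_*\le G$ a.s. for all $w\in\mathcal W$. *)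

theory Defs
  imports "HOL-Analysis.Analysis" "HOL-Probability.Probability"
begin

(* The dual space X* is modelled as the bounded linear functionals
  'a \<Rightarrow>\<^sub>L real; its operator norm is the dual norm, and the pairing
  \<langle>g, x\<rangle> is blinfun_apply g x. *)

definition reflexive_space :: "('a::real_normed_vector) itself \<Rightarrow> bool" where
  "reflexive_space _ \<longleftrightarrow>
     (\<forall>\<phi> :: ('a \<Rightarrow>\<^sub>L real) \<Rightarrow>\<^sub>L real. \<exists>x::'a. \<forall>g. blinfun_apply \<phi> g = blinfun_apply g x)"

definition weak_top :: "('a::real_normed_vector) topology" where
  "weak_top = topology_generated_by
     {{x. blinfun_apply g x \<in> U} | (g :: 'a \<Rightarrow>\<^sub>L real) U. open U}"

definition strongly_convex_on1 :: "('a::real_normed_vector) set \<Rightarrow> ('a \<Rightarrow> real) \<Rightarrow> bool" where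
  "strongly_convex_on1 W \<Phi> \<longleftrightarrow>
     (\<forall>x\<in>W. \<forall>y\<in>W. \<forall>l::real. 0 \<le> l \<and> l \<le> 1 \<longrightarrow>
        \<Phi> (l *\<^sub>R x + (1 - l) *\<^sub>R y)
          \<le> l * \<Phi> x + (1 - l) * \<Phi> y - l * (1 - l) / 2 * (norm (x - y))\<^sup>2)"

definition gateaux_grad_on :: "('a::real_normed_vector) set \<Rightarrow> ('a \<Rightarrow> real) \<Rightarrow> ('a \<Rightarrow> ('a \<Rightarrow>\<^sub>L real)) \<Rightarrow> bool" where
  "gateaux_grad_on W \<Phi> d\<Phi> \<longleftrightarrow>
     (\<forall>y\<in>W. \<forall>x\<in>W.
        ((\<lambda>s. (\<Phi> (y + s *\<^sub>R (x - y)) - \<Phi> y) / s) \<longlongrightarrow> blinfun_apply (d\<Phi> y) (x - y)) (at_right 0))"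

(* Mirror map on W: proper (real valued), weakly l.s.c. (relative to W),
  1-strongly convex on W, Gateaux differentiable on W with gradient dPhi. *)
definition mirror_map :: "('a::banach) set \<Rightarrow> ('a \<Rightarrow> real) \<Rightarrow> ('a \<Rightarrow> ('a \<Rightarrow>\<^sub>L real)) \<Rightarrow> bool" where
  "mirror_map W \<Phi> d\<Phi> \<longleftrightarrow>
     (\<forall>c::real. closedin weak_top {x\<in>W. \<Phi> x \<le> c})
     \<and> strongly_convex_on1 W \<Phi>
     \<and> gateaux_grad_on W \<Phi> d\<Phi>"

definition bregman :: "('a::real_normed_vector \<Rightarrow> real) \<Rightarrow> ('a \<Rightarrow> ('a \<Rightarrow>\<^sub>L real)) \<Rightarrow> 'a \<Rightarrow> 'a \<Rightarrow> real" where
  "bregman \<Phi> d\<Phi> x y = \<Phi> x - \<Phi> y - blinfun_apply (d\<Phi> y) (x - y)"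

definition subdiff_on :: "('a::real_normed_vector) set \<Rightarrow> ('a \<Rightarrow> real) \<Rightarrow> 'a \<Rightarrow> ('a \<Rightarrow>\<^sub>L real) set" where
  "subdiff_on W f w = {g. \<forall>u\<in>W. f w + blinfun_apply g (u - w) \<le> f u}"

(* "E[Y | F] \<in> S(\<omega>) a.s." for an X*-valued random variable Y, with the conditional
  expectation understood scalarly: there is g with g(\<omega>) \<in> S(\<omega>) a.s. such that
  E[\<langle>Y, x\<rangle> | F] = \<langle>g, x\<rangle> a.s. for every bounded F-measurable X-valued x. *)
definition cond_exp_in :: "'w measure \<Rightarrow> 'w measure \<Rightarrow> ('w \<Rightarrow> ('a::real_normed_vector \<Rightarrow>\<^sub>L real))
    \<Rightarrow> ('w \<Rightarrow> ('a \<Rightarrow>\<^sub>L real) set) \<Rightarrow> bool" where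
  "cond_exp_in M F Y S \<longleftrightarrow>
     (\<exists>g. (AE \<omega> in M. g \<omega> \<in> S \<omega>) \<and>
        (\<forall>x :: 'w \<Rightarrow> 'a. x \<in> borel_measurable F \<and> bounded (x ` space M) \<longrightarrow>
            integrable M (\<lambda>\<omega>. blinfun_apply (Y \<omega>) (x \<omega>)) \<and>
            (AE \<omega> in M. real_cond_exp M F (\<lambda>\<omega>. blinfun_apply (Y \<omega>) (x \<omega>)) \<omega>
                         = blinfun_apply (g \<omega>) (x \<omega>))))"

end

theory Submission
  imports Defs
begin


lemma cosh_le_exp_sq:
  fixes y :: real assumes "y \<ge> 0"
  shows "(exp y + exp (-y)) / 2 \<le> exp (y\<^sup>2 / 2)"
proof -
  have h: "-(2*y) * (1/2) + ln (1 + (1/2) * (exp (2*y) - 1)) \<le> (2*y)\<^sup>2 / 8"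
    using Hoeffdings_lemma_aux[of "2*y" "1/2"] assms by simp
  have e: "1 + (1/2) * (exp (2*y) - 1) = (1 + exp (2*y)) / 2" by (simp add: field_simps)
  have e2: "(2*y)\<^sup>2 / 8 = y\<^sup>2/2" by (simp add: power2_eq_square)
  have "ln ((1 + exp (2*y)) / 2) \<le> y + y\<^sup>2/2"
    using h unfolding e e2 by linarith
  hence "(1 + exp (2*y)) / 2 \<le> exp (y + y\<^sup>2/2)"
    by (smt (verit) exp_gt_zero exp_le_cancel_iff exp_ln)
  hence "(1 + exp (2*y)) / 2 * exp (-y) \<le> exp (y + y\<^sup>2/2) * exp (-y)"
    by (intro mult_right_mono) auto
  moreover have "(1 + exp (2*y)) / 2 * exp (-y) = (exp y + exp (-y)) / 2"
    by (simp add: algebra_simps flip: exp_add) 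
  moreover have "exp (y + y\<^sup>2/2) * exp (-y) = exp (y\<^sup>2/2)"
    by (simp flip: exp_add)
  ultimately show ?thesis by simp
qed

lemma exp_chord:
  fixes l c x :: real assumes "l \<ge> 0" "c > 0" "\<bar>x\<bar> \<le> c"
  shows "exp (l * x) \<le> (exp (l*c) + exp (-(l*c))) / 2 + (exp (l*c) - exp (-(l*c))) / (2*c) * x"
proof -
  define \<mu> where "\<mu> = (c + x) / (2*c)"
  have mu: "0 \<le> \<mu>" "\<mu> \<le> 1" using assms by (auto simp: \<mu>_def field_simps)
  have x: "x = (1 - \<mu>) *\<^sub>R (-c) + \<mu> *\<^sub>R c" using assms by (simp add: \<mu>_def field_simps)
  have "exp (l * ((1 - \<mu>) *\<^sub>R (-c) + \<mu> *\<^sub>R c)) \<le> (1-\<mu>) * exp (l * (-c)) + \<mu> * exp (l * c)"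
    using convex_onD[OF convex_on_exp[OF assms(1)], of \<mu> "-c" c] mu by simp
  also have "\<dots> = (exp (l*c) + exp (-(l*c))) / 2 + (exp (l*c) - exp (-(l*c))) / (2*c) * x"
    using assms by (simp add: \<mu>_def field_simps)
  finally show ?thesis using x by simp
qed

lemma azuma:
  fixes M :: "'w measure" and Fs :: "nat \<Rightarrow> 'w measure" and X :: "nat \<Rightarrow> 'w \<Rightarrow> real"
  assumes P: "prob_space M"
  and sub: "\<And>t. subalgebra M (Fs t)" and mono: "\<And>s t. s \<le> t \<Longrightarrow> sets (Fs s) \<subseteq> sets (Fs t)"
  and meas: "\<And>t. t \<in> {1..T} \<Longrightarrow> X t \<in> borel_measurable (Fs (Suc t))"
  and bnd: "\<And>t \<omega>. t \<in> {1..T} \<Longrightarrow> \<omega> \<in> space M \<Longrightarrow> \<bar>X t \<omega>\<bar> \<le> c"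
  and mart: "\<And>t \<psi> K. t \<in> {1..T} \<Longrightarrow> \<psi> \<in> borel_measurable (Fs t) \<Longrightarrow>
      (\<And>\<omega>. \<omega> \<in> space M \<Longrightarrow> 0 \<le> \<psi> \<omega> \<and> \<psi> \<omega> \<le> K) \<Longrightarrow> (\<integral>\<omega>. \<psi> \<omega> * X t \<omega> \<partial>M) \<le> 0"
  and c: "c > 0" and s: "s \<ge> 0" and T: "T \<ge> 1"
  shows "measure M {\<omega>\<in>space M. (\<Sum>t=1..T. X t \<omega>) \<ge> s} \<le> exp (-(s\<^sup>2) / (2 * real T * c\<^sup>2))"
proof -
  interpret prob_space M by (rule P)
  have subM: "\<And>t. subalgebra (Fs (Suc t)) (Fs t)"
    using sub mono unfolding subalgebra_def by (metis le_SucI order_refl)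
  have measM: "X t \<in> borel_measurable M" if "t \<in> {1..T}" for t
    using measurable_from_subalg[OF sub meas[OF that]] .
  show ?thesis
  proof (cases "s = 0")
    case True then show ?thesis by simp
  next
    case False
    with s have s: "s > 0" by simp
    define l where "l = s / (real T * c\<^sup>2)"
    have l: "l > 0" using s c T by (simp add: l_def)
    define a where "a = (exp (l*c) + exp (-(l*c))) / 2"
    define b where "b = (exp (l*c) - exp (-(l*c))) / (2*c)"
    have b: "b \<ge> 0" using l c by (simp add: b_def)
    have a: "a \<ge> 0" by (simp add: a_def add_nonneg_nonneg)
    define S where "S n \<omega> = (\<Sum>t=1..n. X t \<omega>)" for n \<omega>
    have Smeas: "S n \<in> borel_measurable (Fs (Suc n))" if "n \<le> T" for n
      unfolding S_def
    proof (intro borel_measurable_sum)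
      fix t assume t: "t \<in> {1..n}"
      have "X t \<in> borel_measurable (Fs (Suc t))" using meas t that by auto
      moreover have "subalgebra (Fs (Suc n)) (Fs (Suc t))"
        using sub mono t unfolding subalgebra_def by (metis Suc_le_mono atLeastAtMost_iff)
      ultimately show "X t \<in> borel_measurable (Fs (Suc n))"
        using measurable_from_subalg by blast
    qed
    have Sbnd: "\<bar>S n \<omega>\<bar> \<le> real n * c" if "n \<le> T" "\<omega> \<in> space M" for n \<omega>
    proof -
      have "\<bar>S n \<omega>\<bar> \<le> (\<Sum>t=1..n. \<bar>X t \<omega>\<bar>)" unfolding S_def by (rule sum_abs)
      also have "\<dots> \<le> (\<Sum>t=1..n. c)" using bnd that by (intro sum_mono) auto
      finally show ?thesis by simp
    qed
    have SmeasM: "S n \<in> borel_measurable M" if "n \<le> T" for n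
      using measurable_from_subalg[OF sub Smeas[OF that]] .
    have intS: "integrable M (\<lambda>\<omega>. exp (l * S n \<omega>))" if "n \<le> T" for n
    proof (rule integrable_const_bound[where B="exp (l * (real n * c))"])
      show "AE x in M. norm (exp (l * S n x)) \<le> exp (l * (real n * c))"
        using Sbnd[OF that] l by (intro AE_I2) (auto intro: mult_left_mono simp: abs_le_iff)
    qed (use SmeasM[OF that] in simp)
    have main: "(\<integral>\<omega>. exp (l * S n \<omega>) \<partial>M) \<le> a ^ n" if "n \<le> T" for n
      using that
    proof (induction n)
      case 0 then show ?case by (simp add: S_def prob_space)
    next
      case (Suc n)
      have nT: "n \<le> T" and t: "Suc n \<in> {1..T}" using Suc.prems by auto
      define \<psi> where "\<psi> \<omega> = exp (l * S n \<omega>)" for \<omega>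
      have psim: "\<psi> \<in> borel_measurable (Fs (Suc n))" unfolding \<psi>_def using Smeas[OF nT] by simp
      have psiM: "\<psi> \<in> borel_measurable M" unfolding \<psi>_def using SmeasM[OF nT] by simp
      have psib: "0 \<le> \<psi> \<omega> \<and> \<psi> \<omega> \<le> exp (l * (real n * c))" if "\<omega> \<in> space M" for \<omega>
        using Sbnd[OF nT that] l unfolding \<psi>_def by (auto intro: mult_left_mono simp: abs_le_iff)
      have XM: "X (Suc n) \<in> borel_measurable M" using measM[OF t] .
      have int1: "integrable M \<psi>" using intS[OF nT] unfolding \<psi>_def .
      have int2: "integrable M (\<lambda>\<omega>. \<psi> \<omega> * X (Suc n) \<omega>)"
      proof (rule integrable_const_bound[where B="exp (l * (real n * c)) * c"])
        show "AE x in M. norm (\<psi> x * X (Suc n) x) \<le> exp (l * (real n * c)) * c"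
          using psib bnd[OF t] by (intro AE_I2) (auto simp: abs_mult intro: mult_mono)
      qed (use psiM XM in simp)
      have mart': "(\<integral>\<omega>. \<psi> \<omega> * X (Suc n) \<omega> \<partial>M) \<le> 0"
        using mart[OF t psim psib] by simp
      have "(\<integral>\<omega>. exp (l * S (Suc n) \<omega>) \<partial>M) = (\<integral>\<omega>. \<psi> \<omega> * exp (l * X (Suc n) \<omega>) \<partial>M)"
        unfolding \<psi>_def S_def by (simp add: distrib_left exp_add)
      also have "\<dots> \<le> (\<integral>\<omega>. \<psi> \<omega> * (a + b * X (Suc n) \<omega>) \<partial>M)"
      proof (rule integral_mono)
        show "integrable M (\<lambda>\<omega>. \<psi> \<omega> * exp (l * X (Suc n) \<omega>))"
          using intS[OF Suc.prems] unfolding \<psi>_def S_def by (simp add: distrib_left exp_add)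
        show "integrable M (\<lambda>\<omega>. \<psi> \<omega> * (a + b * X (Suc n) \<omega>))"
          using int1 int2 by (simp add: distrib_left algebra_simps)
        fix \<omega> assume "\<omega> \<in> space M"
        then show "\<psi> \<omega> * exp (l * X (Suc n) \<omega>) \<le> \<psi> \<omega> * (a + b * X (Suc n) \<omega>)"
          using psib exp_chord[OF less_imp_le[OF l] c bnd[OF t]] unfolding a_def b_def
          by (intro mult_left_mono) auto
      qed
      also have "\<dots> = a * (\<integral>\<omega>. \<psi> \<omega> \<partial>M) + b * (\<integral>\<omega>. \<psi> \<omega> * X (Suc n) \<omega> \<partial>M)"
        using int1 int2 by (simp add: distrib_left algebra_simps)
      also have "\<dots> \<le> a * a ^ n + 0"
        using Suc.IH[OF nT] mart' a b unfolding \<psi>_def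
        by (intro add_mono mult_left_mono) (auto simp: mult_nonpos_nonneg mult_le_0_iff)
      finally show ?case by simp
    qed
    have "measure M {\<omega>\<in>space M. S T \<omega> \<ge> s} \<le> exp (-l * s) * (\<integral>\<omega>\<in>space M. exp (l * S T \<omega>) \<partial>M)"
      by (rule Chernoff_ineq_ge[OF l]) (unfold set_integrable_def, rule Bochner_Integration.integrable_cong[where f="\<lambda>\<omega>. exp (l * S T \<omega>)", THEN iffD1, OF refl], auto intro: intS)
    also have "(\<integral>\<omega>\<in>space M. exp (l * S T \<omega>) \<partial>M) = (\<integral>\<omega>. exp (l * S T \<omega>) \<partial>M)"
      by (rule set_integral_space[OF intS]) simp
    also have "\<dots> \<le> a ^ T" by (rule main) simp
    also have "a ^ T \<le> exp ((l*c)\<^sup>2/2) ^ T"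
      unfolding a_def using l c by (intro power_mono cosh_le_exp_sq) (auto simp: add_nonneg_nonneg)
    also have "exp ((l*c)\<^sup>2/2) ^ T = exp (real T * ((l*c)\<^sup>2/2))"
      by (rule exp_of_nat_mult[symmetric])
    also have "exp (-l * s) * exp (real T * ((l*c)\<^sup>2/2)) = exp (-(s\<^sup>2) / (2 * real T * c\<^sup>2))"
      using c T by (simp add: l_def flip: exp_add) (simp add: field_simps power2_eq_square)
    finally show ?thesis by (simp add: S_def)
  qed
qed



lemma weak_open_imp_open:
  assumes "openin (weak_top :: ('a::real_normed_vector) topology) U" shows "open U"
proof -
  have "generate_topology_on {{x. blinfun_apply g x \<in> V} | (g :: 'a \<Rightarrow>\<^sub>L real) V. open V} U"
    using assms unfolding weak_top_def by (rule openin_topology_generated_by)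
  then show ?thesis
  proof (induction rule: generate_topology_on.induct)
    case (Basis s)
    have "\<exists>(g :: 'a \<Rightarrow>\<^sub>L real) (V :: real set). s = {x. blinfun_apply g x \<in> V} \<and> open V" using Basis by (simp only: mem_Collect_eq)
    then obtain g :: "'a \<Rightarrow>\<^sub>L real" and V :: "real set" where s: "s = {x. blinfun_apply g x \<in> V}" "open V" by (elim exE conjE)
    have "s = blinfun_apply g -` V" using s by auto
    moreover have "continuous_on UNIV (blinfun_apply g)" by (intro continuous_intros)
    ultimately show ?case using s(2) open_vimage by metis
  qed auto
qed

lemma weak_topspace: "topspace (weak_top :: ('a::real_normed_vector) topology) = UNIV"
proof -
  have "UNIV \<in> {{x. blinfun_apply g x \<in> V} | (g :: 'a \<Rightarrow>\<^sub>L real) V. open V}"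
    by (rule CollectI, rule exI[of _ 0], rule exI[of _ UNIV]) auto
  then show ?thesis unfolding weak_top_def topology_generated_by_topspace by blast
qed

lemma weak_closed_imp_closed:
  assumes "closedin (weak_top :: ('a::real_normed_vector) topology) S" shows "closed S"
proof -
  have "openin weak_top (UNIV - S)" using assms unfolding closedin_def weak_topspace by simp
  then have "open (UNIV - S)" by (rule weak_open_imp_open)
  then show ?thesis by (simp add: closed_def Compl_eq_Diff_UNIV)
qed

lemma phi_borel:
  fixes \<Phi> :: "'a::real_normed_vector \<Rightarrow> real"
  assumes lsc: "\<forall>c::real. closedin weak_top {x\<in>W. \<Phi> x \<le> c}" and W: "closed W"
  shows "(\<lambda>x. if x \<in> W then \<Phi> x else 0) \<in> borel_measurable borel"
  unfolding borel_measurable_iff_le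
proof
  fix a :: real
  have "{x \<in> space borel. (if x \<in> W then \<Phi> x else 0) \<le> a} = {x\<in>W. \<Phi> x \<le> a} \<union> (if 0 \<le> a then - W else {})"
    by auto
  moreover have "closed {x\<in>W. \<Phi> x \<le> a}" using lsc weak_closed_imp_closed by blast
  moreover have "open (- W)" using W by auto
  ultimately show "{x \<in> space borel. (if x \<in> W then \<Phi> x else 0) \<le> a} \<in> sets borel"
    by auto
qed

lemma phi_comp_meas:
  fixes \<Phi> :: "'a::real_normed_vector \<Rightarrow> real"
  assumes lsc: "\<forall>c::real. closedin weak_top {x\<in>W. \<Phi> x \<le> c}" and W: "closed W"
    and y: "y \<in> borel_measurable N" and yW: "\<And>\<omega>. \<omega> \<in> space N \<Longrightarrow> y \<omega> \<in> W"
  shows "(\<lambda>\<omega>. \<Phi> (y \<omega>)) \<in> borel_measurable N"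
proof -
  have "(\<lambda>\<omega>. (\<lambda>x. if x \<in> W then \<Phi> x else 0) (y \<omega>)) \<in> borel_measurable N"
    using measurable_comp[OF y phi_borel[OF lsc W]] by (simp add: comp_def)
  then show ?thesis by (rule measurable_cong[THEN iffD1, rotated]) (simp add: yW)
qed

lemma seq_at_right: "filterlim (\<lambda>n. inverse (real (Suc n))) (at_right (0::real)) sequentially"
  by (rule tendsto_imp_filterlim_at_right[OF LIMSEQ_inverse_real_of_nat]) auto

lemma dphi_comp_meas:
  fixes \<Phi> :: "'a::real_normed_vector \<Rightarrow> real"
  assumes lsc: "\<forall>c::real. closedin weak_top {x\<in>W. \<Phi> x \<le> c}" and W: "closed W" "convex W"
    and gd: "gateaux_grad_on W \<Phi> d\<Phi>" and u: "u \<in> W"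
    and y: "y \<in> borel_measurable N" and yW: "\<And>\<omega>. \<omega> \<in> space N \<Longrightarrow> y \<omega> \<in> W"
  shows "(\<lambda>\<omega>. blinfun_apply (d\<Phi> (y \<omega>)) (u - y \<omega>)) \<in> borel_measurable N"
proof (rule borel_measurable_LIMSEQ_real)
  define s where "s n = inverse (real (Suc n))" for n
  fix \<omega> assume \<omega>: "\<omega> \<in> space N"
  have "((\<lambda>t. (\<Phi> (y \<omega> + t *\<^sub>R (u - y \<omega>)) - \<Phi> (y \<omega>)) / t) \<longlongrightarrow> blinfun_apply (d\<Phi> (y \<omega>)) (u - y \<omega>)) (at_right 0)"
    using gd yW[OF \<omega>] u unfolding gateaux_grad_on_def by blast
  from filterlim_compose[OF this seq_at_right]
  show "(\<lambda>n. (\<Phi> (y \<omega> + s n *\<^sub>R (u - y \<omega>)) - \<Phi> (y \<omega>)) / s n) \<longlonglongrightarrow> blinfun_apply (d\<Phi> (y \<omega>)) (u - y \<omega>)"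
    by (simp add: s_def o_def)
next
  define s where "s n = inverse (real (Suc n))" for n
  fix n
  have sn: "0 \<le> s n" "s n \<le> 1" by (auto simp: s_def field_simps)
  have inW: "y \<omega> + s n *\<^sub>R (u - y \<omega>) \<in> W" if "\<omega> \<in> space N" for \<omega>
  proof -
    have "y \<omega> + s n *\<^sub>R (u - y \<omega>) = (1 - s n) *\<^sub>R y \<omega> + s n *\<^sub>R u" by (simp add: algebra_simps)
    then show ?thesis using convexD_alt[OF W(2) yW[OF that] u sn] by (simp only:)
  qed
  have "(\<lambda>\<omega>. \<Phi> (y \<omega> + s n *\<^sub>R (u - y \<omega>))) \<in> borel_measurable N"
  proof (rule phi_comp_meas[OF lsc W(1) _ inW])
    have "(\<lambda>x. x + s n *\<^sub>R (u - x)) \<in> borel_measurable borel"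
      by (intro borel_measurable_continuous_onI continuous_intros)
    from measurable_comp[OF y this] show "(\<lambda>\<omega>. y \<omega> + s n *\<^sub>R (u - y \<omega>)) \<in> borel_measurable N"
      by (simp add: o_def)
  qed
  moreover have "(\<lambda>\<omega>. \<Phi> (y \<omega>)) \<in> borel_measurable N" by (rule phi_comp_meas[OF lsc W(1) y yW])
  ultimately show "(\<lambda>\<omega>. (\<Phi> (y \<omega> + s n *\<^sub>R (u - y \<omega>)) - \<Phi> (y \<omega>)) / s n) \<in> borel_measurable N"
    by measurable
qed

lemma bregman_comp_meas:
  fixes \<Phi> :: "'a::real_normed_vector \<Rightarrow> real"
  assumes lsc: "\<forall>c::real. closedin weak_top {x\<in>W. \<Phi> x \<le> c}" and W: "closed W" "convex W"
    and gd: "gateaux_grad_on W \<Phi> d\<Phi>" and u: "u \<in> W"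
    and y: "y \<in> borel_measurable N" and yW: "\<And>\<omega>. \<omega> \<in> space N \<Longrightarrow> y \<omega> \<in> W"
  shows "(\<lambda>\<omega>. bregman \<Phi> d\<Phi> u (y \<omega>)) \<in> borel_measurable N"
  unfolding bregman_def
  using phi_comp_meas[OF lsc W(1) y yW] dphi_comp_meas[OF lsc W gd u y yW] by measurable

lemma bregman_lower:
  fixes \<Phi> :: "'a::real_normed_vector \<Rightarrow> real"
  assumes sc: "strongly_convex_on1 W \<Phi>" and gd: "gateaux_grad_on W \<Phi> d\<Phi>"
    and x: "x \<in> W" and y: "y \<in> W"
  shows "bregman \<Phi> d\<Phi> x y \<ge> (norm (x - y))\<^sup>2 / 2"
proof -
  have lim: "((\<lambda>s. (\<Phi> (y + s *\<^sub>R (x - y)) - \<Phi> y) / s) \<longlongrightarrow> blinfun_apply (d\<Phi> y) (x - y)) (at_right 0)"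
    using gd x y unfolding gateaux_grad_on_def by blast
  have lim2: "((\<lambda>s. \<Phi> x - \<Phi> y - (1 - s) / 2 * (norm (x - y))\<^sup>2) \<longlongrightarrow> \<Phi> x - \<Phi> y - (1 - 0) / 2 * (norm (x - y))\<^sup>2) (at_right 0)"
    by (intro tendsto_intros) simp
  have ev: "eventually (\<lambda>s. (\<Phi> (y + s *\<^sub>R (x - y)) - \<Phi> y) / s \<le> \<Phi> x - \<Phi> y - (1 - s) / 2 * (norm (x - y))\<^sup>2) (at_right (0::real))"
    using eventually_at_right_real[OF zero_less_one]
  proof (rule eventually_mono)
    fix s :: real assume s: "s \<in> {0<..<1}"
    have "\<Phi> (s *\<^sub>R x + (1 - s) *\<^sub>R y) \<le> s * \<Phi> x + (1 - s) * \<Phi> y - s * (1 - s) / 2 * (norm (x - y))\<^sup>2"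
      using sc x y s unfolding strongly_convex_on1_def by auto
    moreover have "y + s *\<^sub>R (x - y) = s *\<^sub>R x + (1 - s) *\<^sub>R y" by (simp add: algebra_simps)
    ultimately have A: "\<Phi> (y + s *\<^sub>R (x - y)) \<le> s * \<Phi> x + (1 - s) * \<Phi> y - s * (1 - s) / 2 * (norm (x - y))\<^sup>2"
      by (simp only:)
    have B: "s * (a - b - (1 - s) / 2 * n) = s * a + (1 - s) * b - s * (1 - s) / 2 * n - b" for a b n :: real
      by (simp add: algebra_simps)
    from A B[of "\<Phi> x" "\<Phi> y" "(norm (x - y))\<^sup>2"]
    have "\<Phi> (y + s *\<^sub>R (x - y)) - \<Phi> y \<le> s * (\<Phi> x - \<Phi> y - (1 - s) / 2 * (norm (x - y))\<^sup>2)"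
      by linarith
    then show "(\<Phi> (y + s *\<^sub>R (x - y)) - \<Phi> y) / s \<le> \<Phi> x - \<Phi> y - (1 - s) / 2 * (norm (x - y))\<^sup>2"
      using s by (simp add: divide_le_eq mult.commute)
  qed
  have "blinfun_apply (d\<Phi> y) (x - y) \<le> \<Phi> x - \<Phi> y - (1 - 0) / 2 * (norm (x - y))\<^sup>2"
    by (rule tendsto_le[OF trivial_limit_at_right_real lim2 lim ev])
  then show ?thesis unfolding bregman_def by simp
qed

lemma three_point:
  fixes \<Phi> :: "'a::real_normed_vector \<Rightarrow> real" and U :: "'a \<Rightarrow>\<^sub>L real"
  assumes gd: "gateaux_grad_on W \<Phi> d\<Phi>" and W: "convex W"
    and y: "y \<in> W" and p: "p \<in> W" and u: "u \<in> W"
    and opt: "\<forall>u\<in>W. \<eta> * blinfun_apply U p + bregman \<Phi> d\<Phi> p y \<le> \<eta> * blinfun_apply U u + bregman \<Phi> d\<Phi> u y"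
  shows "\<eta> * blinfun_apply U (p - u) \<le> bregman \<Phi> d\<Phi> u y - bregman \<Phi> d\<Phi> u p - bregman \<Phi> d\<Phi> p y"
proof -
  have lim: "((\<lambda>s. (\<Phi> (p + s *\<^sub>R (u - p)) - \<Phi> p) / s) \<longlongrightarrow> blinfun_apply (d\<Phi> p) (u - p)) (at_right 0)"
    using gd u p unfolding gateaux_grad_on_def by blast
  have lim2: "((\<lambda>s. \<eta> * blinfun_apply U (u - p) + (\<Phi> (p + s *\<^sub>R (u - p)) - \<Phi> p) / s - blinfun_apply (d\<Phi> y) (u - p))
     \<longlongrightarrow> \<eta> * blinfun_apply U (u - p) + blinfun_apply (d\<Phi> p) (u - p) - blinfun_apply (d\<Phi> y) (u - p)) (at_right 0)"
    by (intro tendsto_intros lim)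
  have ev: "eventually (\<lambda>s. 0 \<le> \<eta> * blinfun_apply U (u - p) + (\<Phi> (p + s *\<^sub>R (u - p)) - \<Phi> p) / s - blinfun_apply (d\<Phi> y) (u - p)) (at_right (0::real))"
    using eventually_at_right_real[OF zero_less_one]
  proof (rule eventually_mono)
    fix s :: real assume s: "s \<in> {0<..<1}"
    have "p + s *\<^sub>R (u - p) = (1 - s) *\<^sub>R p + s *\<^sub>R u" by (simp add: algebra_simps)
    moreover have "(1 - s) *\<^sub>R p + s *\<^sub>R u \<in> W" using convexD_alt[OF W p u, of s] s by simp
    ultimately have zW: "p + s *\<^sub>R (u - p) \<in> W" by (simp only:)
    have "\<eta> * blinfun_apply U p + bregman \<Phi> d\<Phi> p y \<le> \<eta> * blinfun_apply U (p + s *\<^sub>R (u - p)) + bregman \<Phi> d\<Phi> (p + s *\<^sub>R (u - p)) y"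
      using opt zW by blast
    moreover have "blinfun_apply U (p + s *\<^sub>R (u - p)) = blinfun_apply U p + s * blinfun_apply U (u - p)"
      by (simp add: blinfun.bilinear_simps)
    moreover have "blinfun_apply (d\<Phi> y) (p + s *\<^sub>R (u - p) - y) = blinfun_apply (d\<Phi> y) (p - y) + s * blinfun_apply (d\<Phi> y) (u - p)"
      by (simp add: blinfun.bilinear_simps)
    ultimately have A: "0 \<le> s * (\<eta> * blinfun_apply U (u - p)) + (\<Phi> (p + s *\<^sub>R (u - p)) - \<Phi> p) - s * blinfun_apply (d\<Phi> y) (u - p)"
      unfolding bregman_def by (simp add: algebra_simps)
    have "\<And>a b c :: real. s * (a + b / s - c) = s * a + b - s * c"
      using s by (simp add: field_simps)
    note this[of "\<eta> * blinfun_apply U (u - p)" "\<Phi> (p + s *\<^sub>R (u - p)) - \<Phi> p" "blinfun_apply (d\<Phi> y) (u - p)"]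
    then have "0 \<le> s * (\<eta> * blinfun_apply U (u - p) + (\<Phi> (p + s *\<^sub>R (u - p)) - \<Phi> p) / s - blinfun_apply (d\<Phi> y) (u - p))"
      using A by simp
    then show "0 \<le> \<eta> * blinfun_apply U (u - p) + (\<Phi> (p + s *\<^sub>R (u - p)) - \<Phi> p) / s - blinfun_apply (d\<Phi> y) (u - p)"
      using s by (simp add: zero_le_mult_iff)
  qed
  have "0 \<le> \<eta> * blinfun_apply U (u - p) + blinfun_apply (d\<Phi> p) (u - p) - blinfun_apply (d\<Phi> y) (u - p)"
    by (rule tendsto_lowerbound[OF lim2 ev trivial_limit_at_right_real])
  moreover have "bregman \<Phi> d\<Phi> u y - bregman \<Phi> d\<Phi> u p - bregman \<Phi> d\<Phi> p y
      = blinfun_apply (d\<Phi> p) (u - p) - blinfun_apply (d\<Phi> y) (u - p)"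
    unfolding bregman_def by (simp add: blinfun.bilinear_simps algebra_simps)
  ultimately show ?thesis by (simp add: blinfun.bilinear_simps algebra_simps)
qed

lemma md_step:
  fixes \<Phi> :: "'a::real_normed_vector \<Rightarrow> real" and U :: "'a \<Rightarrow>\<^sub>L real"
  assumes sc: "strongly_convex_on1 W \<Phi>" and gd: "gateaux_grad_on W \<Phi> d\<Phi>" and W: "convex W"
    and y: "y \<in> W" and p: "p \<in> W" and u: "u \<in> W" and eta: "\<eta> > 0"
    and opt: "\<forall>u\<in>W. \<eta> * blinfun_apply U p + bregman \<Phi> d\<Phi> p y \<le> \<eta> * blinfun_apply U u + bregman \<Phi> d\<Phi> u y"
  shows "\<eta> * blinfun_apply U (y - u) \<le> bregman \<Phi> d\<Phi> u y - bregman \<Phi> d\<Phi> u p + \<eta>\<^sup>2 * (norm U)\<^sup>2 / 2"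
proof -
  have 1: "\<eta> * blinfun_apply U (p - u) \<le> bregman \<Phi> d\<Phi> u y - bregman \<Phi> d\<Phi> u p - bregman \<Phi> d\<Phi> p y"
    by (rule three_point[OF gd W y p u opt])
  have 2: "bregman \<Phi> d\<Phi> p y \<ge> (norm (p - y))\<^sup>2 / 2" by (rule bregman_lower[OF sc gd p y])
  have 3: "\<eta> * blinfun_apply U (y - p) \<le> \<eta> * (norm U * norm (y - p))"
    using eta norm_blinfun[of U "y - p"] by (intro mult_left_mono) auto
  have 4: "\<eta> * (norm U * norm (y - p)) \<le> (norm (p - y))\<^sup>2 / 2 + \<eta>\<^sup>2 * (norm U)\<^sup>2 / 2"
  proof -
    have ab: "a * b \<le> b\<^sup>2 / 2 + a\<^sup>2 / 2" for a b :: real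
    proof -
      have "0 \<le> (a - b)\<^sup>2" by simp
      also have "(a - b)\<^sup>2 = a\<^sup>2 - 2*a*b + b\<^sup>2" by (simp add: power2_diff)
      finally show ?thesis by linarith
    qed
    have "norm (p - y) = norm (y - p)" by (rule norm_minus_commute)
    then show ?thesis using ab[of "\<eta> * norm U" "norm (y - p)"] by (simp add: power_mult_distrib mult.assoc)
  qed
  have "\<eta> * blinfun_apply U (y - u) = \<eta> * blinfun_apply U (p - u) + \<eta> * blinfun_apply U (y - p)"
    by (simp add: blinfun.bilinear_simps algebra_simps)
  then show ?thesis using 1 2 3 4 by linarith
qed


lemma sfs_helper: "prob_space M \<Longrightarrow> subalgebra M F \<Longrightarrow> sigma_finite_subalgebra M F"
  by (metis finite_measure_subalgebra.intro finite_measure_subalgebra_axioms.intro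
      finite_measure_subalgebra_is_sigma_finite prob_space_def)
lemma tele: "(\<Sum>t=1..T. (b t - b (Suc t)::real)) = b 1 - b (Suc T)"
  using sum_Suc_diff[of 1 T "\<lambda>t. - b t"] by (cases T) (simp_all add: algebra_simps)

theorem theorem6p2:
  fixes W :: "'a::banach set"
    and \<Phi> :: "'a \<Rightarrow> real" and d\<Phi> :: "'a \<Rightarrow> ('a \<Rightarrow>\<^sub>L real)"
    and f h :: "'a \<Rightarrow> real" and wstar :: 'a
    and M :: "'w measure" and Flt :: "nat \<Rightarrow> 'w measure" and Z :: "'z measure"
    and F' H' :: "'a \<Rightarrow> 'z \<Rightarrow> ('a \<Rightarrow>\<^sub>L real)"
    and w :: "nat \<Rightarrow> 'w \<Rightarrow> 'a" and v :: "nat \<Rightarrow> 'w \<Rightarrow> real" and \<zeta> :: "nat \<Rightarrow> 'w \<Rightarrow> 'z"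
    and D R G \<eta> \<delta> Err :: real and T :: nat
  defines "\<epsilon> \<equiv> R\<^sup>2 / (2 * \<eta> * real T) + \<eta> * G\<^sup>2 / 2
                 + 2 * D * G / sqrt (real T) * sqrt (2 * ln (4 / \<delta>)) + Err"
  assumes refl: "reflexive_space TYPE('a)"
    and W: "W \<noteq> {}" "closed W" "convex W"
    and mirror: "mirror_map W \<Phi> d\<Phi>"
    and convex: "convex_on W f" "convex_on W h"
    and opt: "wstar \<in> W" "h wstar \<le> 0" "\<forall>u\<in>W. h u \<le> 0 \<longrightarrow> f wstar \<le> f u"
    and diam: "\<forall>u\<in>W. \<forall>u'\<in>W. norm (u - u') \<le> D"
    and breg: "\<forall>u\<in>W. \<forall>u'\<in>W. bregman \<Phi> d\<Phi> u u' \<le> R\<^sup>2 / 2"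
    and eta: "\<eta> > 0" and T: "T \<ge> 1"
    and delta: "0 < \<delta>" "\<delta> < 1"
    and prob: "prob_space M"
    and filt: "\<forall>t. subalgebra M (Flt t)" "\<forall>s t. s \<le> t \<longrightarrow> sets (Flt s) \<subseteq> sets (Flt t)"
    and meas_w: "\<forall>t\<in>{1..T}. w t \<in> borel_measurable (Flt t)"
    and meas_v: "\<forall>t\<in>{1..T}. v t \<in> borel_measurable (Flt t)"
    and meas_\<zeta>: "\<forall>t\<in>{1..T}. \<zeta> t \<in> measurable (Flt (Suc t)) Z"
    and init: "\<forall>\<omega>\<in>space M. w 1 \<omega> \<in> W"
    and step: "\<forall>t\<in>{1..T}. \<forall>\<omega>\<in>space M.
        w (Suc t) \<omega> \<in> W \<and>
        (\<forall>u\<in>W. \<eta> * blinfun_apply (if v t \<omega> \<le> \<epsilon> then F' (w t \<omega>) (\<zeta> t \<omega>) else H' (w t \<omega>) (\<zeta> t \<omega>)) (w (Suc t) \<omega>)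
                  + bregman \<Phi> d\<Phi> (w (Suc t) \<omega>) (w t \<omega>)
              \<le> \<eta> * blinfun_apply (if v t \<omega> \<le> \<epsilon> then F' (w t \<omega>) (\<zeta> t \<omega>) else H' (w t \<omega>) (\<zeta> t \<omega>)) u
                  + bregman \<Phi> d\<Phi> u (w t \<omega>))"
    and sgF: "\<forall>t\<in>{1..T}. cond_exp_in M (Flt t) (\<lambda>\<omega>. F' (w t \<omega>) (\<zeta> t \<omega>)) (\<lambda>\<omega>. subdiff_on W f (w t \<omega>))"
    and sgH: "\<forall>t\<in>{1..T}. cond_exp_in M (Flt t) (\<lambda>\<omega>. H' (w t \<omega>) (\<zeta> t \<omega>)) (\<lambda>\<omega>. subdiff_on W h (w t \<omega>))"
    and bndF: "\<forall>t\<in>{1..T}. AE \<omega> in M. \<forall>u\<in>W. norm (F' u (\<zeta> t \<omega>)) \<le> G"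
    and bndH: "\<forall>t\<in>{1..T}. AE \<omega> in M. \<forall>u\<in>W. norm (H' u (\<zeta> t \<omega>)) \<le> G"
    and Err: "Err \<ge> 0"
    and err_event: "\<exists>B\<in>sets M. measure M B \<ge> 1 - \<delta> / 2 \<and>
        (\<forall>\<omega>\<in>B. \<forall>t\<in>{1..T}. \<bar>v t \<omega> - h (w t \<omega>)\<bar> \<le> Err)"
  shows "\<exists>A\<in>sets M. measure M A \<ge> 1 - \<delta> \<and>
     (\<forall>\<omega>\<in>A.
        let S = {t\<in>{1..T}. v t \<omega> \<le> \<epsilon>};
            wbar = (1 / real (card S)) *\<^sub>R (\<Sum>t\<in>S. w t \<omega>)
        in S \<noteq> {} \<and> f wbar - f wstar \<le> \<epsilon> \<and> h wbar \<le> \<epsilon> + Err)"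
proof -
  interpret prob_space M by (rule prob)
  have lsc: "\<forall>c::real. closedin weak_top {x\<in>W. \<Phi> x \<le> c}" and sc: "strongly_convex_on1 W \<Phi>"
    and gd: "gateaux_grad_on W \<Phi> d\<Phi>" using mirror unfolding mirror_map_def by auto
  have spF: "space (Flt t) = space M" for t using filt(1) unfolding subalgebra_def by auto
  have subF: "subalgebra (Flt t') (Flt t)" if "t \<le> t'" for t t'
    using filt that spF unfolding subalgebra_def by auto
  have sfs: "sigma_finite_subalgebra M (Flt t)" for t by (rule sfs_helper[OF prob filt(1)[rule_format]])
  have wW: "w t \<omega> \<in> W" if "t \<in> {1..Suc T}" "\<omega> \<in> space M" for t \<omega>
    using that
  proof (induction t)
    case 0 then show ?case by simp
  next
    case (Suc t)
    show ?case
    proof (cases "t = 0")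
      case True then show ?thesis using init Suc.prems by simp
    next
      case False then show ?thesis using step Suc.prems by auto
    qed
  qed
  have Gnn: "G \<ge> 0"
  proof (rule ccontr)
    assume "\<not> G \<ge> 0"
    obtain u where u: "u \<in> W" using W(1) by auto
    have "AE \<omega> in M. \<forall>u\<in>W. norm (F' u (\<zeta> 1 \<omega>)) \<le> G" using bndF T by auto
    then have "AE \<omega> in M. False"
    proof (rule AE_mp, intro AE_I2 impI)
      fix \<omega> assume "\<forall>u\<in>W. norm (F' u (\<zeta> 1 \<omega>)) \<le> G"
      then show False using u \<open>\<not> G \<ge> 0\<close> by (meson norm_ge_zero order.trans)
    qed
    then show False by (simp add: AE_False)
  qed
  have Dnn: "D \<ge> 0" using diam W(1) by (metis all_not_in_conv norm_ge_zero order.trans)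
  have Tpos: "real T > 0" using T by simp
  have lnpos: "ln (4 / \<delta>) > 0" using delta by simp
  define c where "c = 2 * G * D"
  have cnn: "c \<ge> 0" using Gnn Dnn by (simp add: c_def)
  define s where "s = c * sqrt (2 * real T * ln (4 / \<delta>))"
  have snn: "s \<ge> 0" using cnn lnpos by (simp add: s_def)
  define U where "U t \<omega> = (if v t \<omega> \<le> \<epsilon> then F' (w t \<omega>) (\<zeta> t \<omega>) else H' (w t \<omega>) (\<zeta> t \<omega>))" for t \<omega>
  define xF where "xF t \<omega> = (if v t \<omega> \<le> \<epsilon> then w t \<omega> - wstar else 0)" for t \<omega>
  define xH where "xH t \<omega> = (if v t \<omega> \<le> \<epsilon> then 0 else w t \<omega> - wstar)" for t \<omega>
  define Y where "Y t \<omega> = blinfun_apply (F' (w t \<omega>) (\<zeta> t \<omega>)) (xF t \<omega>) + blinfun_apply (H' (w t \<omega>) (\<zeta> t \<omega>)) (xH t \<omega>)" for t \<omega>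
  have Yeq: "Y t \<omega> = blinfun_apply (U t \<omega>) (w t \<omega> - wstar)" for t \<omega>
    unfolding Y_def U_def xF_def xH_def by (simp add: blinfun.zero_right)
  define Z where "Z t = real_cond_exp M (Flt t) (Y t)" for t
  define L where "L t \<omega> = (if v t \<omega> \<le> \<epsilon> then f (w t \<omega>) - f wstar else h (w t \<omega>) - h wstar)" for t \<omega>
  define bb where "bb k \<omega> = (if k \<le> T then bregman \<Phi> d\<Phi> wstar (w k \<omega>) else 0)" for k \<omega>
  define Q where "Q t \<omega> = (bb t \<omega> - bb (Suc t) \<omega>) / \<eta> + \<eta> * G\<^sup>2 / 2" for t \<omega>
  define Dd where "Dd t \<omega> = min c (max (-c) (Z t \<omega> - Q t \<omega>))" for t \<omega>
  have Dd_bnd: "\<bar>Dd t \<omega>\<bar> \<le> c" for t \<omega> using cnn unfolding Dd_def by auto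
  have breg_nn: "bregman \<Phi> d\<Phi> u y \<ge> 0" if "u \<in> W" "y \<in> W" for u y
  proof -
    have "(norm (u - y))\<^sup>2 / 2 \<ge> 0" by simp
    then show ?thesis using bregman_lower[OF sc gd that] by linarith
  qed
  have wmeas: "w t \<in> borel_measurable (Flt t)" if "t \<in> {1..T}" for t using meas_w that by auto
  have vmeas: "v t \<in> borel_measurable (Flt t)" if "t \<in> {1..T}" for t using meas_v that by auto
  have dmeas: "(\<lambda>\<omega>. w t \<omega> - wstar) \<in> borel_measurable (Flt t)" if "t \<in> {1..T}" for t
  proof -
    have "(\<lambda>x::'a. x - wstar) \<in> borel_measurable borel"
      by (intro borel_measurable_continuous_onI continuous_intros)
    from measurable_comp[OF wmeas[OF that] this] show ?thesis by (simp add: o_def)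
  qed
  have setm: "{\<omega> \<in> space (Flt t). v t \<omega> \<le> \<epsilon>} \<in> sets (Flt t)" if "t \<in> {1..T}" for t
    using vmeas[OF that] by measurable
  have xFm: "xF t \<in> borel_measurable (Flt t)" if "t \<in> {1..T}" for t
    unfolding xF_def by (rule measurable_If[OF dmeas[OF that] _ setm[OF that]]) simp
  have xHm: "xH t \<in> borel_measurable (Flt t)" if "t \<in> {1..T}" for t
    unfolding xH_def by (rule measurable_If[OF _ dmeas[OF that] setm[OF that]]) simp
  have dnorm: "norm (w t \<omega> - wstar) \<le> D" if "t \<in> {1..Suc T}" "\<omega> \<in> space M" for t \<omega>
    using diam wW[OF that] opt(1) by auto
  have xFb: "bounded (xF t ` space M)" if "t \<in> {1..T}" for t
    unfolding bounded_iff using dnorm that Dnn by (intro exI[of _ D]) (auto simp: xF_def)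
  have xHb: "bounded (xH t ` space M)" if "t \<in> {1..T}" for t
    unfolding bounded_iff using dnorm that Dnn by (intro exI[of _ D]) (auto simp: xH_def)
  have key: "integrable M (Y t) \<and> Z t \<in> borel_measurable (Flt t) \<and>
      (AE \<omega> in M. L t \<omega> \<le> Z t \<omega> \<and> Z t \<omega> \<le> G * D \<and> - (G * D) \<le> Z t \<omega> \<and>
          \<bar>Y t \<omega>\<bar> \<le> G * D \<and> Y t \<omega> \<le> Q t \<omega>)" if t: "t \<in> {1..T}" for t
  proof -
    interpret sf: sigma_finite_subalgebra M "Flt t" by (rule sfs)
    obtain gF where gF: "AE \<omega> in M. gF \<omega> \<in> subdiff_on W f (w t \<omega>)"
      and gF2: "\<And>x :: 'w \<Rightarrow> 'a. x \<in> borel_measurable (Flt t) \<Longrightarrow> bounded (x ` space M) \<Longrightarrow>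
            integrable M (\<lambda>\<omega>. blinfun_apply (F' (w t \<omega>) (\<zeta> t \<omega>)) (x \<omega>)) \<and>
            (AE \<omega> in M. real_cond_exp M (Flt t) (\<lambda>\<omega>. blinfun_apply (F' (w t \<omega>) (\<zeta> t \<omega>)) (x \<omega>)) \<omega>
                         = blinfun_apply (gF \<omega>) (x \<omega>))"
      using sgF t unfolding cond_exp_in_def by blast
    obtain gH where gH: "AE \<omega> in M. gH \<omega> \<in> subdiff_on W h (w t \<omega>)"
      and gH2: "\<And>x :: 'w \<Rightarrow> 'a. x \<in> borel_measurable (Flt t) \<Longrightarrow> bounded (x ` space M) \<Longrightarrow>
            integrable M (\<lambda>\<omega>. blinfun_apply (H' (w t \<omega>) (\<zeta> t \<omega>)) (x \<omega>)) \<and>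
            (AE \<omega> in M. real_cond_exp M (Flt t) (\<lambda>\<omega>. blinfun_apply (H' (w t \<omega>) (\<zeta> t \<omega>)) (x \<omega>)) \<omega>
                         = blinfun_apply (gH \<omega>) (x \<omega>))"
      using sgH t unfolding cond_exp_in_def by blast
    define YF where "YF \<omega> = blinfun_apply (F' (w t \<omega>) (\<zeta> t \<omega>)) (xF t \<omega>)" for \<omega>
    define YH where "YH \<omega> = blinfun_apply (H' (w t \<omega>) (\<zeta> t \<omega>)) (xH t \<omega>)" for \<omega>
    have iF: "integrable M YF" and aF: "AE \<omega> in M. real_cond_exp M (Flt t) YF \<omega> = blinfun_apply (gF \<omega>) (xF t \<omega>)"
      using gF2[OF xFm[OF t] xFb[OF t]] unfolding YF_def by auto
    have iH: "integrable M YH" and aH: "AE \<omega> in M. real_cond_exp M (Flt t) YH \<omega> = blinfun_apply (gH \<omega>) (xH t \<omega>)"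
      using gH2[OF xHm[OF t] xHb[OF t]] unfolding YH_def by auto
    have Yfun: "Y t = (\<lambda>\<omega>. YF \<omega> + YH \<omega>)" unfolding Y_def YF_def YH_def by auto
    have iY: "integrable M (Y t)" unfolding Yfun using iF iH by simp
    have aZ: "AE \<omega> in M. Z t \<omega> = real_cond_exp M (Flt t) YF \<omega> + real_cond_exp M (Flt t) YH \<omega>"
      unfolding Z_def Yfun by (rule sf.real_cond_exp_add[OF iF iH])
    have bU: "AE \<omega> in M. norm (U t \<omega>) \<le> G"
    proof -
      have "AE \<omega> in M. (\<forall>u\<in>W. norm (F' u (\<zeta> t \<omega>)) \<le> G) \<and> (\<forall>u\<in>W. norm (H' u (\<zeta> t \<omega>)) \<le> G)"
        using bndF bndH t by auto
      then show ?thesis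
      proof (rule AE_mp, intro AE_I2 impI)
        fix \<omega> assume \<omega>: "\<omega> \<in> space M"
          and b: "(\<forall>u\<in>W. norm (F' u (\<zeta> t \<omega>)) \<le> G) \<and> (\<forall>u\<in>W. norm (H' u (\<zeta> t \<omega>)) \<le> G)"
        have "w t \<omega> \<in> W" using wW[OF _ \<omega>] t by auto
        then show "norm (U t \<omega>) \<le> G" using b unfolding U_def by auto
      qed
    qed
    have bY: "AE \<omega> in M. \<bar>Y t \<omega>\<bar> \<le> G * D"
      using bU
    proof (rule AE_mp, intro AE_I2 impI)
      fix \<omega> assume \<omega>: "\<omega> \<in> space M" and b: "norm (U t \<omega>) \<le> G"
      have "\<bar>Y t \<omega>\<bar> \<le> norm (U t \<omega>) * norm (w t \<omega> - wstar)"
        unfolding Yeq using norm_blinfun[of "U t \<omega>" "w t \<omega> - wstar"] by simp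
      also have "\<dots> \<le> G * D" using b dnorm[of t \<omega>] \<omega> t Gnn by (intro mult_mono) auto
      finally show "\<bar>Y t \<omega>\<bar> \<le> G * D" .
    qed
    have Zle: "AE \<omega> in M. Z t \<omega> \<le> G * D"
      unfolding Z_def by (rule sf.real_cond_exp_le_c[OF iY]) (use bY in auto)
    have Zge: "AE \<omega> in M. Z t \<omega> \<ge> - (G * D)"
      unfolding Z_def by (rule sf.real_cond_exp_ge_c[OF iY]) (use bY in auto)
    have LZ: "AE \<omega> in M. L t \<omega> \<le> Z t \<omega>"
      using aZ aF aH gF gH
    proof (eventually_elim)
      case (elim \<omega>)
      have sF: "f (w t \<omega>) + blinfun_apply (gF \<omega>) (wstar - w t \<omega>) \<le> f wstar"
        using elim(4) opt(1) unfolding subdiff_on_def by blast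
      have sH: "h (w t \<omega>) + blinfun_apply (gH \<omega>) (wstar - w t \<omega>) \<le> h wstar"
        using elim(5) opt(1) unfolding subdiff_on_def by blast
      have m1: "blinfun_apply (gF \<omega>) (w t \<omega> - wstar) = - blinfun_apply (gF \<omega>) (wstar - w t \<omega>)"
        by (metis blinfun.minus_right minus_diff_eq)
      have m2: "blinfun_apply (gH \<omega>) (w t \<omega> - wstar) = - blinfun_apply (gH \<omega>) (wstar - w t \<omega>)"
        by (metis blinfun.minus_right minus_diff_eq)
      show ?case using elim(1,2,3) sF sH m1 m2
        unfolding L_def xF_def xH_def by (auto simp: blinfun.zero_right)
    qed
    have YQ: "AE \<omega> in M. Y t \<omega> \<le> Q t \<omega>"
      using bU
    proof (rule AE_mp, intro AE_I2 impI)
      fix \<omega> assume \<omega>: "\<omega> \<in> space M" and b: "norm (U t \<omega>) \<le> G"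
      have y: "w t \<omega> \<in> W" and p: "w (Suc t) \<omega> \<in> W" using wW \<omega> t by auto
      have optc: "\<forall>u\<in>W. \<eta> * blinfun_apply (U t \<omega>) (w (Suc t) \<omega>) + bregman \<Phi> d\<Phi> (w (Suc t) \<omega>) (w t \<omega>)
          \<le> \<eta> * blinfun_apply (U t \<omega>) u + bregman \<Phi> d\<Phi> u (w t \<omega>)"
        using step t \<omega> unfolding U_def by auto
      have ms: "\<eta> * blinfun_apply (U t \<omega>) (w t \<omega> - wstar) \<le> bregman \<Phi> d\<Phi> wstar (w t \<omega>)
          - bregman \<Phi> d\<Phi> wstar (w (Suc t) \<omega>) + \<eta>\<^sup>2 * (norm (U t \<omega>))\<^sup>2 / 2"
        by (rule md_step[OF sc gd W(3) y p opt(1) eta optc])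
      have "\<eta>\<^sup>2 * (norm (U t \<omega>))\<^sup>2 / 2 \<le> \<eta>\<^sup>2 * G\<^sup>2 / 2"
        using b by (intro divide_right_mono mult_left_mono power_mono) auto
      moreover have "bb t \<omega> = bregman \<Phi> d\<Phi> wstar (w t \<omega>)" using t by (simp add: bb_def)
      moreover have "bb (Suc t) \<omega> \<le> bregman \<Phi> d\<Phi> wstar (w (Suc t) \<omega>)"
        using breg_nn[OF opt(1) p] by (simp add: bb_def)
      ultimately have "\<eta> * Y t \<omega> \<le> bb t \<omega> - bb (Suc t) \<omega> + \<eta>\<^sup>2 * G\<^sup>2 / 2"
        using ms unfolding Yeq by linarith
      also have "\<dots> = \<eta> * Q t \<omega>" unfolding Q_def using eta by (simp add: field_simps power2_eq_square)
      finally show "Y t \<omega> \<le> Q t \<omega>" using eta by simp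
    qed
    have Zm: "Z t \<in> borel_measurable (Flt t)" unfolding Z_def by simp
    show ?thesis using iY Zm LZ Zle Zge bY YQ by auto
  qed
  have bbm: "bb k \<in> borel_measurable (Flt k)" if "k \<ge> 1" for k
  proof (cases "k \<le> T")
    case True
    then have kT: "k \<in> {1..T}" using that by auto
    have "(\<lambda>\<omega>. bregman \<Phi> d\<Phi> wstar (w k \<omega>)) \<in> borel_measurable (Flt k)"
      by (rule bregman_comp_meas[OF lsc W(2) W(3) gd opt(1) wmeas[OF kT]])
         (use wW kT spF in auto)
    then show ?thesis using True by (simp add: bb_def[abs_def])
  next
    case False then show ?thesis by (simp add: bb_def[abs_def])
  qed
  have Qm: "Q t \<in> borel_measurable (Flt (Suc t))" if t: "t \<in> {1..T}" for t
  proof -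
    have "bb t \<in> borel_measurable (Flt (Suc t))"
      using measurable_from_subalg[OF subF bbm] t by auto
    moreover have "bb (Suc t) \<in> borel_measurable (Flt (Suc t))" using bbm by simp
    ultimately show ?thesis unfolding Q_def[abs_def] by measurable
  qed
  have Ddm: "Dd t \<in> borel_measurable (Flt (Suc t))" if t: "t \<in> {1..T}" for t
  proof -
    have "Z t \<in> borel_measurable (Flt (Suc t))"
      using measurable_from_subalg[OF subF, of t "Suc t"] key[OF t] by auto
    then show ?thesis using Qm[OF t] unfolding Dd_def[abs_def] by measurable
  qed
  have DdM: "Dd t \<in> borel_measurable M" if t: "t \<in> {1..T}" for t
    using measurable_from_subalg[OF filt(1)[rule_format] Ddm[OF t]] .
  have mart: "(\<integral>\<omega>. \<psi> \<omega> * Dd t \<omega> \<partial>M) \<le> 0"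
    if t: "t \<in> {1..T}" and psim: "\<psi> \<in> borel_measurable (Flt t)"
      and psib: "\<And>\<omega>. \<omega> \<in> space M \<Longrightarrow> 0 \<le> \<psi> \<omega> \<and> \<psi> \<omega> \<le> K" for t \<psi> K
  proof -
    interpret sf: sigma_finite_subalgebra M "Flt t" by (rule sfs)
    have iY: "integrable M (Y t)" and
      ae: "AE \<omega> in M. L t \<omega> \<le> Z t \<omega> \<and> Z t \<omega> \<le> G * D \<and> - (G * D) \<le> Z t \<omega> \<and>
          \<bar>Y t \<omega>\<bar> \<le> G * D \<and> Y t \<omega> \<le> Q t \<omega>" using key[OF t] by auto
    have YM: "Y t \<in> borel_measurable M" using iY by auto
    have psiM: "\<psi> \<in> borel_measurable M" using measurable_from_subalg[OF filt(1)[rule_format] psim] .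
    have iPY: "integrable M (\<lambda>\<omega>. \<psi> \<omega> * Y t \<omega>)"
    proof (rule integrable_const_bound[where B="K * (G * D)"])
      show "AE x in M. norm (\<psi> x * Y t x) \<le> K * (G * D)"
        using ae
      proof (rule AE_mp, intro AE_I2 impI)
        fix \<omega> assume "\<omega> \<in> space M" and a: "L t \<omega> \<le> Z t \<omega> \<and> Z t \<omega> \<le> G * D \<and> - (G * D) \<le> Z t \<omega> \<and>
          \<bar>Y t \<omega>\<bar> \<le> G * D \<and> Y t \<omega> \<le> Q t \<omega>"
        then show "norm (\<psi> \<omega> * Y t \<omega>) \<le> K * (G * D)" using psib[of \<omega>]
          by (auto simp: abs_mult intro!: mult_mono)
      qed
    qed (use psiM YM in simp)
    have i1: "integrable M (\<lambda>\<omega>. \<psi> \<omega> * Z t \<omega>)" and e1: "(\<integral>\<omega>. \<psi> \<omega> * Z t \<omega> \<partial>M) = (\<integral>\<omega>. \<psi> \<omega> * Y t \<omega> \<partial>M)"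
      using sf.real_cond_exp_intg[OF iPY psim YM] unfolding Z_def by auto
    have iD: "integrable M (\<lambda>\<omega>. \<psi> \<omega> * Dd t \<omega>)"
    proof (rule integrable_const_bound[where B="K * c"])
      show "AE x in M. norm (\<psi> x * Dd t x) \<le> K * c"
      proof (intro AE_I2)
        fix x assume x: "x \<in> space M"
        then show "norm (\<psi> x * Dd t x) \<le> K * c"
          using psib[OF x] Dd_bnd[of t x] cnn by (auto simp: abs_mult intro!: mult_mono)
      qed
    qed (use psiM DdM[OF t] in simp)
    have "(\<integral>\<omega>. \<psi> \<omega> * Dd t \<omega> \<partial>M) \<le> (\<integral>\<omega>. \<psi> \<omega> * Z t \<omega> - \<psi> \<omega> * Y t \<omega> \<partial>M)"
    proof (rule integral_mono_AE[OF iD])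
      show "integrable M (\<lambda>\<omega>. \<psi> \<omega> * Z t \<omega> - \<psi> \<omega> * Y t \<omega>)" using i1 iPY by simp
      show "AE \<omega> in M. \<psi> \<omega> * Dd t \<omega> \<le> \<psi> \<omega> * Z t \<omega> - \<psi> \<omega> * Y t \<omega>"
        using ae
      proof (rule AE_mp, intro AE_I2 impI)
        fix \<omega> assume \<omega>: "\<omega> \<in> space M" and a: "L t \<omega> \<le> Z t \<omega> \<and> Z t \<omega> \<le> G * D \<and> - (G * D) \<le> Z t \<omega> \<and>
          \<bar>Y t \<omega>\<bar> \<le> G * D \<and> Y t \<omega> \<le> Q t \<omega>"
        have "Dd t \<omega> \<le> Z t \<omega> - Y t \<omega>" using a unfolding Dd_def c_def by auto
        then have "\<psi> \<omega> * Dd t \<omega> \<le> \<psi> \<omega> * (Z t \<omega> - Y t \<omega>)" using psib[OF \<omega>] by (intro mult_left_mono) auto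
        then show "\<psi> \<omega> * Dd t \<omega> \<le> \<psi> \<omega> * Z t \<omega> - \<psi> \<omega> * Y t \<omega>" by (simp add: algebra_simps)
      qed
    qed
    also have "\<dots> = 0" using i1 iPY e1 by simp
    finally show ?thesis .
  qed
  define Cset where "Cset = {\<omega>\<in>space M. (\<Sum>t=1..T. Dd t \<omega>) \<le> s}"
  have SumM: "(\<lambda>\<omega>. \<Sum>t=1..T. Dd t \<omega>) \<in> borel_measurable M"
    using DdM by (intro borel_measurable_sum) auto
  have Cset_m: "Cset \<in> sets M" unfolding Cset_def using SumM by measurable
  have Cbad: "measure M (space M - Cset) \<le> \<delta> / 4"
  proof (cases "c = 0")
    case True
    then have "Dd t \<omega> = 0" for t \<omega> unfolding Dd_def by simp
    then have "space M - Cset = {}" unfolding Cset_def using snn by auto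
    then show ?thesis using delta by (simp only: measure_empty)
  next
    case False
    then have cpos: "c > 0" using cnn by simp
    have az: "measure M {\<omega>\<in>space M. (\<Sum>t=1..T. Dd t \<omega>) \<ge> s} \<le> exp (-(s\<^sup>2) / (2 * real T * c\<^sup>2))"
    proof (rule azuma[OF prob filt(1)[rule_format] filt(2)[rule_format]])
      show "\<And>t. t \<in> {1..T} \<Longrightarrow> Dd t \<in> borel_measurable (Flt (Suc t))" by (rule Ddm)
      show "\<And>t \<omega>. t \<in> {1..T} \<Longrightarrow> \<omega> \<in> space M \<Longrightarrow> \<bar>Dd t \<omega>\<bar> \<le> c" by (rule Dd_bnd)
      show "\<And>t \<psi> K. t \<in> {1..T} \<Longrightarrow> \<psi> \<in> borel_measurable (Flt t) \<Longrightarrow>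
        (\<And>\<omega>. \<omega> \<in> space M \<Longrightarrow> 0 \<le> \<psi> \<omega> \<and> \<psi> \<omega> \<le> K) \<Longrightarrow> (\<integral>\<omega>. \<psi> \<omega> * Dd t \<omega> \<partial>M) \<le> 0"
        by (rule mart)
    qed (use cpos snn T in auto)
    have "s\<^sup>2 = c\<^sup>2 * (2 * real T * ln (4 / \<delta>))"
      unfolding s_def using lnpos by (simp add: power_mult_distrib)
    then have "-(s\<^sup>2) / (2 * real T * c\<^sup>2) = - ln (4 / \<delta>)" using cpos Tpos by (simp add: field_simps)
    then have "exp (-(s\<^sup>2) / (2 * real T * c\<^sup>2)) = \<delta> / 4"
      using delta by (simp add: exp_minus)
    moreover have "space M - Cset \<subseteq> {\<omega>\<in>space M. (\<Sum>t=1..T. Dd t \<omega>) \<ge> s}" unfolding Cset_def by auto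
    moreover have "{\<omega>\<in>space M. (\<Sum>t=1..T. Dd t \<omega>) \<ge> s} \<in> sets M" using SumM by measurable
    ultimately show ?thesis using az finite_measure_mono by (smt (verit))
  qed
  have aeall: "AE \<omega> in M. \<forall>t\<in>{1..T}. L t \<omega> \<le> Z t \<omega> \<and> Z t \<omega> - Q t \<omega> \<le> c"
  proof (rule eventually_ball_finite, simp, intro ballI)
    fix t assume t: "t \<in> {1..T}"
    have "AE \<omega> in M. L t \<omega> \<le> Z t \<omega> \<and> Z t \<omega> \<le> G * D \<and> - (G * D) \<le> Z t \<omega> \<and>
          \<bar>Y t \<omega>\<bar> \<le> G * D \<and> Y t \<omega> \<le> Q t \<omega>" using key[OF t] by auto
    then show "AE \<omega> in M. L t \<omega> \<le> Z t \<omega> \<and> Z t \<omega> - Q t \<omega> \<le> c"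
      by eventually_elim (auto simp: c_def)
  qed
  then obtain N where N: "{\<omega>\<in>space M. \<not> (\<forall>t\<in>{1..T}. L t \<omega> \<le> Z t \<omega> \<and> Z t \<omega> - Q t \<omega> \<le> c)} \<subseteq> N"
    "emeasure M N = 0" "N \<in> sets M" by (rule AE_E)
  have Nnull: "N \<in> null_sets M" using N by auto
  obtain Bs where Bs: "Bs \<in> sets M" "measure M Bs \<ge> 1 - \<delta> / 2"
    "\<forall>\<omega>\<in>Bs. \<forall>t\<in>{1..T}. \<bar>v t \<omega> - h (w t \<omega>)\<bar> \<le> Err" using err_event by blast
  define A where "A = (Bs \<inter> Cset) - N"
  have Am: "A \<in> sets M" unfolding A_def using Bs(1) Cset_m N(3) by auto
  have "measure M Bs \<le> measure M ((Bs \<inter> Cset) \<union> (space M - Cset))"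
    using Bs(1) Cset_m sets.sets_into_space[OF Bs(1)] by (intro finite_measure_mono) auto
  also have "\<dots> \<le> measure M (Bs \<inter> Cset) + measure M (space M - Cset)"
    using Bs(1) Cset_m by (intro measure_Un_le) auto
  finally have "measure M (Bs \<inter> Cset) \<ge> 1 - \<delta>" using Bs(2) Cbad delta by linarith
  moreover have "measure M A = measure M (Bs \<inter> Cset)"
    unfolding A_def using Bs(1) Cset_m Nnull by (intro measure_Diff_null_set) auto
  ultimately have Ameas: "measure M A \<ge> 1 - \<delta>" by simp
  have final: "let S = {t\<in>{1..T}. v t \<omega> \<le> \<epsilon>};
            wbar = (1 / real (card S)) *\<^sub>R (\<Sum>t\<in>S. w t \<omega>)
        in S \<noteq> {} \<and> f wbar - f wstar \<le> \<epsilon> \<and> h wbar \<le> \<epsilon> + Err" if \<omega>A: "\<omega> \<in> A" for \<omega>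
  proof -
    have \<omega>: "\<omega> \<in> space M" "\<omega> \<in> Bs" "(\<Sum>t=1..T. Dd t \<omega>) \<le> s" "\<omega> \<notin> N"
      using \<omega>A unfolding A_def Cset_def by auto
    have good: "\<forall>t\<in>{1..T}. L t \<omega> \<le> Z t \<omega> \<and> Z t \<omega> - Q t \<omega> \<le> c" using N(1) \<omega> by blast
    have err: "\<forall>t\<in>{1..T}. \<bar>v t \<omega> - h (w t \<omega>)\<bar> \<le> Err" using Bs(3) \<omega>(2) by blast
    define \<kappa> where "\<kappa> = \<epsilon> - Err"
    have ZQD: "Z t \<omega> - Q t \<omega> \<le> Dd t \<omega>" if "t \<in> {1..T}" for t
      using good that unfolding Dd_def by auto
    have "(\<Sum>t=1..T. L t \<omega>) \<le> (\<Sum>t=1..T. Q t \<omega> + Dd t \<omega>)"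
      using good ZQD by (intro sum_mono) force
    also have "\<dots> = (\<Sum>t=1..T. Q t \<omega>) + (\<Sum>t=1..T. Dd t \<omega>)" by (rule sum.distrib)
    also have "(\<Sum>t=1..T. Q t \<omega>) = (\<Sum>t=1..T. bb t \<omega> - bb (Suc t) \<omega>) / \<eta> + real T * (\<eta> * G\<^sup>2 / 2)"
      unfolding Q_def by (simp add: sum.distrib sum_divide_distrib)
    also have "(\<Sum>t=1..T. bb t \<omega> - bb (Suc t) \<omega>) = bb 1 \<omega> - bb (Suc T) \<omega>" by (rule tele)
    also have "bb 1 \<omega> - bb (Suc T) \<omega> = bregman \<Phi> d\<Phi> wstar (w 1 \<omega>)" using T by (simp add: bb_def)
    finally have sumL: "(\<Sum>t=1..T. L t \<omega>) \<le> bregman \<Phi> d\<Phi> wstar (w 1 \<omega>) / \<eta> + real T * (\<eta> * G\<^sup>2 / 2) + s"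
      using \<omega>(3) by linarith
    have "bregman \<Phi> d\<Phi> wstar (w 1 \<omega>) \<le> R\<^sup>2 / 2" using breg opt(1) init \<omega>(1) by blast
    from divide_right_mono[OF this less_imp_le[OF eta]]
    have "bregman \<Phi> d\<Phi> wstar (w 1 \<omega>) / \<eta> \<le> R\<^sup>2 / (2 * \<eta>)" by (metis divide_divide_eq_left)
    moreover have "real T * \<kappa> = R\<^sup>2 / (2 * \<eta>) + real T * (\<eta> * G\<^sup>2 / 2) + s"
    proof -
      have sq: "sqrt (2 * real T * ln (4 / \<delta>)) = sqrt (real T) * sqrt (2 * ln (4 / \<delta>))"
        by (simp add: real_sqrt_mult)
      have sT: "sqrt (real T) * sqrt (real T) = real T" using Tpos by simp
      have sTp: "sqrt (real T) > 0" using Tpos by simp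
      show ?thesis unfolding \<kappa>_def \<epsilon>_def s_def c_def sq using Tpos eta sTp
        by (simp add: field_simps)
    qed
    ultimately have sumL2: "(\<Sum>t=1..T. L t \<omega>) \<le> real T * \<kappa>" using sumL by linarith
    define S where "S = {t\<in>{1..T}. v t \<omega> \<le> \<epsilon>}"
    define NS where "NS = {t\<in>{1..T}. \<not> v t \<omega> \<le> \<epsilon>}"
    have fin: "finite S" "finite NS" unfolding S_def NS_def by auto
    have un: "{1..T} = S \<union> NS" "S \<inter> NS = {}" unfolding S_def NS_def by auto
    have cardT: "card S + card NS = T"
    proof -
      have "card {1..T} = T" by simp
      then show ?thesis using card_Un_disjoint[OF fin un(2)] un(1) by metis
    qed
    have splitL: "(\<Sum>t=1..T. L t \<omega>) = (\<Sum>t\<in>S. L t \<omega>) + (\<Sum>t\<in>NS. L t \<omega>)"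
      using sum.union_disjoint[OF fin un(2)] un(1) by simp
    have NSgt: "L t \<omega> > \<kappa>" if "t \<in> NS" for t
    proof -
      have "t \<in> {1..T}" "\<not> v t \<omega> \<le> \<epsilon>" using that unfolding NS_def by auto
      then show ?thesis using err opt(2) unfolding L_def \<kappa>_def by force
    qed
    have NSge: "(\<Sum>t\<in>NS. L t \<omega>) \<ge> real (card NS) * \<kappa>"
      using sum_mono[of NS "\<lambda>_. \<kappa>" "\<lambda>t. L t \<omega>"] NSgt by fastforce
    have Sne: "S \<noteq> {}"
    proof
      assume "S = {}"
      then have NSe: "NS = {1..T}" "NS \<noteq> {}" using un T by auto
      have "(\<Sum>t\<in>NS. \<kappa>) < (\<Sum>t\<in>NS. L t \<omega>)"
        by (rule sum_strict_mono[OF fin(2) NSe(2)]) (use NSgt in auto)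
      then show False using sumL2 splitL \<open>S = {}\<close> NSe(1) by simp
    qed
    define n where "n = card S"
    have npos: "real n > 0" using Sne fin unfolding n_def by (simp add: card_gt_0_iff)
    have sumS: "(\<Sum>t\<in>S. f (w t \<omega>) - f wstar) \<le> real n * \<kappa>"
    proof -
      have "(\<Sum>t\<in>S. L t \<omega>) = (\<Sum>t\<in>S. f (w t \<omega>) - f wstar)"
        unfolding L_def S_def by (rule sum.cong) auto
      moreover have "real n + real (card NS) = real T" using cardT unfolding n_def by linarith
      ultimately show ?thesis using sumL2 splitL NSge by (smt (verit) distrib_right)
    qed
    have SW: "w t \<omega> \<in> W" if "t \<in> S" for t using that wW \<omega>(1) unfolding S_def by auto
    define wbar where "wbar = (1 / real (card S)) *\<^sub>R (\<Sum>t\<in>S. w t \<omega>)"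
    have wbar: "wbar = (\<Sum>t\<in>S. (1 / real n) *\<^sub>R w t \<omega>)" unfolding wbar_def n_def by (simp add: scaleR_sum_right)
    have wsum: "(\<Sum>t\<in>S. 1 / real n) = 1" using npos unfolding n_def by simp
    have jf: "f wbar \<le> (\<Sum>t\<in>S. (1 / real n) * f (w t \<omega>))"
      unfolding wbar by (rule convex_on_sum[OF fin(1) Sne convex(1) wsum _ SW]) auto
    have jh: "h wbar \<le> (\<Sum>t\<in>S. (1 / real n) * h (w t \<omega>))"
      unfolding wbar by (rule convex_on_sum[OF fin(1) Sne convex(2) wsum _ SW]) auto
    have "f wbar - f wstar \<le> (\<Sum>t\<in>S. (1 / real n) * (f (w t \<omega>) - f wstar))"
      using jf wsum by (simp add: sum_subtractf right_diff_distrib sum_distrib_right[symmetric])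
    also have "\<dots> = (1 / real n) * (\<Sum>t\<in>S. f (w t \<omega>) - f wstar)" by (simp add: sum_distrib_left)
    also have "\<dots> \<le> (1 / real n) * (real n * \<kappa>)" using sumS npos by (intro mult_left_mono) auto
    also have "\<dots> = \<kappa>" using npos by simp
    also have "\<kappa> \<le> \<epsilon>" using Err unfolding \<kappa>_def by simp
    finally have fres: "f wbar - f wstar \<le> \<epsilon>" .
    have "(\<Sum>t\<in>S. (1 / real n) * h (w t \<omega>)) \<le> (\<Sum>t\<in>S. (1 / real n) * (\<epsilon> + Err))"
    proof (rule sum_mono)
      fix t assume t: "t \<in> S"
      then have "t \<in> {1..T}" "v t \<omega> \<le> \<epsilon>" unfolding S_def by auto
      then have "h (w t \<omega>) \<le> \<epsilon> + Err" using err by force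
      then show "(1 / real n) * h (w t \<omega>) \<le> (1 / real n) * (\<epsilon> + Err)" using npos by (intro mult_left_mono) auto
    qed
    also have "\<dots> = \<epsilon> + Err" using wsum by (simp add: sum_distrib_right[symmetric])
    finally have hres: "h wbar \<le> \<epsilon> + Err" using jh by linarith
    show ?thesis unfolding Let_def using Sne fres hres unfolding S_def wbar_def by simp
  qed
  show ?thesis using Am Ameas final by blast

qed
end
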